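(* Let $d\ge 1$ be an integer and let ${\cal P}=\{\Pi_i,\pi_i\}_{i}$ be any (discrete) ensemble of pure states on ${\cal H}_d=\mathbb{C}^d$, where $\Pi_i=|\psi_i\rangle\langle\psi_i|$ with $\|\psi_i\|=1$, $\pi_i\ge 0$ and $\sum_i\pi_i=1$. Then the accessible fidelity of ${\cal P}$ satisfies $$F_{\cal P}\ge \frac{2}{d+1}.$$
   Context: For a measurement ${\cal E}=\{E_b\}$ (a POVM on ${\cal H}_d$: positive operators with $\sum_b E_b=I$) and a state-reproduction strategy ${\cal M}: b\mapsto\sigma_b$ (an assignment of a density operator $\sigma_b$ on ${\cal H}_d$ to each outcome $b$), the average fidelity is $F_{\cal P}({\cal E},{\cal M})=\sum_{b,i}\pi_i\,{\rm tr}(\Pi_iE_b)\,{\rm tr}(\Pi_i\sigma_b)$. The accessible fidelity of ${\cal P}$ is $F_{\cal P}=\sup_{{\cal E},{\cal M}}F_{\cal P}({\cal E},{\cal M})$, the supremum over all POVMs and all reproduction strategies. *)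

theory Defs
  imports "HOL-Analysis.Analysis"
begin

text \<open>Operators on H_d = C^d are d x d complex matrices, with d = CARD('d) for a finite type 'd.\<close>

definition ctrace :: "complex^'d^'d \<Rightarrow> complex" where
  "ctrace A = (\<Sum>i\<in>UNIV. A $ i $ i)"

definition positive_op :: "complex^'d^'d \<Rightarrow> bool" where
  "positive_op A \<longleftrightarrow> (\<forall>x::complex^'d.
     let q = (\<Sum>i\<in>UNIV. cnj (x $ i) * (A *v x) $ i) in Im q = 0 \<and> Re q \<ge> 0)"

definition density_op :: "complex^'d^'d \<Rightarrow> bool" where
  "density_op \<sigma> \<longleftrightarrow> positive_op \<sigma> \<and> ctrace \<sigma> = 1"

definition proj :: "complex^'d \<Rightarrow> complex^'d^'d" where
  "proj \<psi> = (\<chi> j k. \<psi> $ j * cnj (\<psi> $ k))"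

definition is_povm :: "nat set \<Rightarrow> (nat \<Rightarrow> complex^'d^'d) \<Rightarrow> bool" where
  "is_povm B E \<longleftrightarrow> finite B \<and> (\<forall>b\<in>B. positive_op (E b)) \<and> (\<Sum>b\<in>B. E b) = mat 1"

text \<open>Pure-state ensemble {Pi_i, pi_i}, indexed by nat (discrete; finite ensembles via zero weights).\<close>
definition pure_ensemble :: "(nat \<Rightarrow> complex^'d) \<Rightarrow> (nat \<Rightarrow> real) \<Rightarrow> bool" where
  "pure_ensemble \<psi> p \<longleftrightarrow> (\<forall>i. norm (\<psi> i) = 1) \<and> (\<forall>i. p i \<ge> 0) \<and> p sums 1"

definition avg_fidelity ::
  "(nat \<Rightarrow> complex^'d) \<Rightarrow> (nat \<Rightarrow> real) \<Rightarrow> nat set \<Rightarrow> (nat \<Rightarrow> complex^'d^'d)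
     \<Rightarrow> (nat \<Rightarrow> complex^'d^'d) \<Rightarrow> real" where
  "avg_fidelity \<psi> p B E \<sigma> =
     (\<Sum>b\<in>B. \<Sum>i. p i * Re (ctrace (proj (\<psi> i) ** E b)) * Re (ctrace (proj (\<psi> i) ** \<sigma> b)))"

definition accessible_fidelity :: "(nat \<Rightarrow> complex^'d) \<Rightarrow> (nat \<Rightarrow> real) \<Rightarrow> real" where
  "accessible_fidelity \<psi> p =
     Sup {avg_fidelity \<psi> p B E \<sigma> | B E \<sigma>. is_povm B E \<and> (\<forall>b\<in>B. density_op (\<sigma> b))}"

end

theory Submission
  imports Defs
begin

definition ph :: "bool \<times> bool \<Rightarrow> complex" where
  "ph u = (if fst u then -1 else 1) * (if snd u then \<i> else 1)"

definition rot :: "bool \<times> bool \<Rightarrow> bool \<times> bool" where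
  "rot u = (fst u \<noteq> snd u, \<not> snd u)"

lemma ph_rot: "ph (rot u) = \<i> * ph u"
  by (cases u) (auto simp: ph_def rot_def)

lemma ph_cnj: "cnj (ph u) * ph u = 1"
  by (cases u) (auto simp: ph_def)

lemma ph_cnj': "ph u * cnj (ph u) = 1"
  by (cases u) (auto simp: ph_def)

lemma ph4: "cnj (ph a) * ph b * cnj (ph b) * ph a = 1"
  by (cases a; cases b) (auto simp: ph_def)

lemma norm_ph: "norm (ph u) = 1"
  by (cases u) (auto simp: ph_def)

lemma inj_rot: "inj rot"
  unfolding inj_def rot_def by auto

definition T :: "'d \<Rightarrow> ('d \<Rightarrow> bool \<times> bool) \<Rightarrow> ('d \<Rightarrow> bool \<times> bool)" where
  "T r f = f(r := rot (f r))"

lemma inj_T: "inj (T r)"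
proof (rule injI)
  fix f g assume "T r f = T r g"
  hence a: "\<And>x. (T r f) x = (T r g) x" by simp
  show "f = g"
  proof
    fix x show "f x = g x"
      using a[of x] inj_rot by (cases "x = r") (auto simp: T_def inj_eq)
  qed
qed

lemma sum_zero_rot:
  fixes g :: "('d::finite \<Rightarrow> bool \<times> bool) \<Rightarrow> complex"
  assumes "\<And>f. g (T r f) = c * g f" "c \<noteq> 1"
  shows "(\<Sum>f\<in>UNIV. g f) = 0"
proof -
  have s: "surj (T r)" by (rule finite_UNIV_inj_surj[OF _ inj_T]) simp
  have "(\<Sum>f\<in>UNIV. g f) = (\<Sum>f\<in>UNIV. g (T r f))"
    using sum.reindex[OF inj_T[of r], of g] s by simp
  also have "\<dots> = c * (\<Sum>f\<in>UNIV. g f)" using assms(1) by (simp add: sum_distrib_left)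
  finally have "(1 - c) * (\<Sum>f\<in>UNIV. g f) = 0" by (simp add: algebra_simps)
  thus ?thesis using assms(2) by simp
qed

lemma mi_ne: "-\<i> \<noteq> (1::complex)"
  by (simp add: complex_eq_iff)

lemma T_app: "T r f x = (if x = r then rot (f r) else f x)"
  by (simp add: T_def)

lemma moment2:
  fixes j k :: "'d::finite"
  shows "(\<Sum>f\<in>UNIV. cnj (ph (f j)) * ph (f k)) = (if j = k then of_nat CARD('d \<Rightarrow> bool \<times> bool) else 0)"
proof (cases "j = k")
  case True thus ?thesis by (simp add: ph_cnj)
next
  case False
  show ?thesis using False
    by (intro trans[OF sum_zero_rot[where r=j and c="-\<i>"]]) (auto simp: T_app ph_rot mi_ne mult_ac)
qed

lemma moment4:
  fixes j k l m :: "'d::finite"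
  shows "(\<Sum>f\<in>UNIV. cnj (ph (f j)) * ph (f k) * cnj (ph (f l)) * ph (f m)) =
    (if (j = k \<and> l = m) \<or> (j = m \<and> l = k) then of_nat CARD('d \<Rightarrow> bool \<times> bool) else 0)"
proof (cases "(j = k \<and> l = m) \<or> (j = m \<and> l = k)")
  case True
  have "\<And>f. cnj (ph (f j)) * ph (f k) * cnj (ph (f l)) * ph (f m) = 1"
    using True by (elim disjE conjE) (simp_all add: ph_cnj ph4)
  thus ?thesis using True by simp
next
  case False
  show ?thesis
  proof (cases "j \<noteq> k \<and> j \<noteq> m")
    case True
    show ?thesis
    proof (cases "l = j")
      case True
      thus ?thesis using False \<open>j \<noteq> k \<and> j \<noteq> m\<close>
        by (intro trans[OF sum_zero_rot[where r=j and c="-1"]]) (auto simp: T_app ph_rot mult_ac)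
    next
      case False
      thus ?thesis using \<open>j \<noteq> k \<and> j \<noteq> m\<close>
        by (intro trans[OF sum_zero_rot[where r=j and c="-\<i>"]]) (auto simp: T_app ph_rot mi_ne mult_ac)
    qed
  next
    case jj: False
    show ?thesis
    proof (cases "l = j")
      case True
      thus ?thesis using False jj
        by (intro trans[OF sum_zero_rot[where r=l and c="-\<i>"]]) (auto simp: T_app ph_rot mi_ne mult_ac)
    next
      case lj: False
      thus ?thesis using False jj
        by (intro trans[OF sum_zero_rot[where r=l and c="-\<i>"]]) (auto simp: T_app ph_rot mi_ne mult_ac)
    qed
  qed
qed


definition qf :: "complex^'d^'d \<Rightarrow> complex^'d \<Rightarrow> complex" where
  "qf A x = (\<Sum>k\<in>UNIV. cnj (x$k) * (A *v x)$k)"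

definition ip :: "complex^'d \<Rightarrow> complex^'d \<Rightarrow> complex" where
  "ip v x = (\<Sum>j\<in>UNIV. cnj (v$j) * x$j)"

definition smp :: "complex \<Rightarrow> complex^'d \<Rightarrow> complex^'d^'d" where
  "smp c v = (\<chi> r s. c * (v$r * cnj (v$s)))"

lemma zcz: "z * cnj z = (complex_of_real (cmod z))^2"
  using complex_norm_square[of z] by simp

lemma czz: "cnj z * z = (complex_of_real (cmod z))^2"
  using complex_norm_square[of z] by (simp add: mult.commute)

lemma ifz1: "(if P then a else 0) * (b::complex) = (if P then a * b else 0)" by simp
lemma ifz2: "(b::complex) * (if P then a else 0) = (if P then b * a else 0)" by simp
lemma cnj_if: "cnj (if P then a else b) = (if P then cnj a else cnj b)" by simp

lemma ctrace_proj: "ctrace (proj x ** A) = qf A x"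
proof -
  have "ctrace (proj x ** A) = (\<Sum>i\<in>UNIV. \<Sum>k\<in>UNIV. x$i * cnj (x$k) * A$k$i)"
    by (simp add: ctrace_def proj_def matrix_matrix_mult_def)
  also have "\<dots> = (\<Sum>k\<in>UNIV. \<Sum>i\<in>UNIV. x$i * cnj (x$k) * A$k$i)"
    by (rule sum.swap)
  also have "\<dots> = qf A x"
    by (simp add: qf_def matrix_vector_mult_def sum_distrib_left mult_ac)
  finally show ?thesis .
qed

lemma smp_mult: "(smp c v *v x) $ k = c * v$k * ip v x"
  by (simp add: smp_def matrix_vector_mult_def ip_def sum_distrib_left mult_ac)

lemma qf_smp: "qf (smp c v) x = c * of_real ((cmod (ip v x))^2)"
proof -
  have "qf (smp c v) x = c * ip v x * (\<Sum>k\<in>UNIV. cnj (x$k) * v$k)"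
    by (simp add: qf_def smp_mult sum_distrib_left mult_ac)
  also have "(\<Sum>k\<in>UNIV. cnj (x$k) * v$k) = cnj (ip v x)"
    by (simp add: ip_def mult_ac)
  finally show ?thesis by (simp add: zcz czz mult_ac)
qed

lemma ctrace_smp: "ctrace (smp c v) = c * of_real (\<Sum>r\<in>UNIV. (cmod (v$r))^2)"
  by (simp add: ctrace_def smp_def zcz czz sum_distrib_left)

lemma positive_smp: "0 \<le> c \<Longrightarrow> positive_op (smp (of_real c) v)"
  unfolding positive_op_def Let_def qf_def[symmetric] qf_smp by simp

lemma pos_qf: "positive_op A \<Longrightarrow> Im (qf A x) = 0 \<and> 0 \<le> Re (qf A x)"
  unfolding positive_op_def Let_def qf_def by auto

lemma mv_sum: "((\<Sum>b\<in>B. A b) *v x) = (\<Sum>b\<in>B. A b *v x)"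
proof -
  have "\<And>k. ((\<Sum>b\<in>B. A b) *v x) $ k = (\<Sum>b\<in>B. A b *v x) $ k"
  proof -
    fix k
    have "((\<Sum>b\<in>B. A b) *v x) $ k = (\<Sum>j\<in>UNIV. \<Sum>b\<in>B. A b $ k $ j * x $ j)"
      by (simp add: matrix_vector_mult_def sum_distrib_right)
    also have "\<dots> = (\<Sum>b\<in>B. \<Sum>j\<in>UNIV. A b $ k $ j * x $ j)" by (rule sum.swap)
    also have "\<dots> = (\<Sum>b\<in>B. A b *v x) $ k" by (simp add: matrix_vector_mult_def)
    finally show "((\<Sum>b\<in>B. A b) *v x) $ k = (\<Sum>b\<in>B. A b *v x) $ k" .
  qed
  thus ?thesis by (simp add: vec_eq_iff)
qed

lemma qf_sum: "qf (\<Sum>b\<in>B. A b) x = (\<Sum>b\<in>B. qf (A b) x)"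
proof -
  have "qf (\<Sum>b\<in>B. A b) x = (\<Sum>k\<in>UNIV. \<Sum>b\<in>B. cnj (x$k) * (A b *v x)$k)"
    by (simp add: qf_def mv_sum sum_distrib_left)
  also have "\<dots> = (\<Sum>b\<in>B. qf (A b) x)" by (subst sum.swap) (simp add: qf_def)
  finally show ?thesis .
qed

lemma unit_sum: "norm (x::complex^'d) = 1 \<Longrightarrow> (\<Sum>j\<in>UNIV. (cmod (x$j))^2) = 1"
  unfolding norm_vec_def L2_set_def
  by (metis real_sqrt_eq_1_iff)

lemma qf_mat1: "qf (mat 1) x = of_real (\<Sum>j\<in>UNIV. (cmod (x$j))^2)"
  by (simp add: qf_def zcz czz mult.commute)

lemma unit_comp_le: "norm (x::complex^'d) = 1 \<Longrightarrow> (cmod (x$j))^2 \<le> 1"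
  using unit_sum[of x] member_le_sum[of j UNIV "\<lambda>j. (cmod (x$j))^2"] by simp

lemma povm_a:
  assumes "is_povm B E" "norm x = 1"
  shows "(\<Sum>b\<in>B. Re (qf (E b) x)) = 1" "\<And>b. b \<in> B \<Longrightarrow> 0 \<le> Re (qf (E b) x)"
        "\<And>b. b \<in> B \<Longrightarrow> Re (qf (E b) x) \<le> 1"
proof -
  have fin: "finite B" and pos: "\<And>b. b \<in> B \<Longrightarrow> positive_op (E b)" and s: "(\<Sum>b\<in>B. E b) = mat 1"
    using assms(1) by (auto simp: is_povm_def)
  have "(\<Sum>b\<in>B. qf (E b) x) = 1" using qf_sum[of E B x] s qf_mat1[of x] unit_sum[OF assms(2)] by simp
  hence "Re (\<Sum>b\<in>B. qf (E b) x) = 1" by simp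
  thus s1: "(\<Sum>b\<in>B. Re (qf (E b) x)) = 1" by (simp add: Re_sum)
  show nn: "\<And>b. b \<in> B \<Longrightarrow> 0 \<le> Re (qf (E b) x)" using pos pos_qf by blast
  show "\<And>b. b \<in> B \<Longrightarrow> Re (qf (E b) x) \<le> 1"
    using member_le_sum[of _ B "\<lambda>b. Re (qf (E b) x)"] nn fin s1 by fastforce
qed

definition D :: "('d \<Rightarrow> bool \<times> bool) \<Rightarrow> complex^'d \<Rightarrow> complex^'d" where
  "D f x = (\<chi> j. ph (f j) * x$j)"


lemma qf_D_sum:
  fixes A :: "complex^'d::finite^'d"
  shows "(\<Sum>f\<in>UNIV. qf A (D f x)) = of_nat CARD('d \<Rightarrow> bool \<times> bool) * (\<Sum>k\<in>UNIV. cnj (x$k) * A$k$k * x$k)"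
proof -
  have "(\<Sum>f\<in>UNIV. qf A (D f x)) =
    (\<Sum>f\<in>UNIV. \<Sum>k\<in>UNIV. \<Sum>j\<in>UNIV. (cnj (ph (f k)) * ph (f j)) * (cnj (x$k) * A$k$j * x$j))"
    by (simp add: qf_def D_def matrix_vector_mult_def sum_distrib_left mult_ac)
  also have "\<dots> = (\<Sum>k\<in>UNIV. \<Sum>f\<in>UNIV. \<Sum>j\<in>UNIV. (cnj (ph (f k)) * ph (f j)) * (cnj (x$k) * A$k$j * x$j))"
    by (rule sum.swap)
  also have "\<dots> = (\<Sum>k\<in>UNIV. \<Sum>j\<in>UNIV. \<Sum>f\<in>UNIV. (cnj (ph (f k)) * ph (f j)) * (cnj (x$k) * A$k$j * x$j))"
    by (subst sum.swap) simp
  also have "\<dots> = (\<Sum>k\<in>UNIV. \<Sum>j\<in>UNIV. (\<Sum>f\<in>UNIV. cnj (ph (f k)) * ph (f j)) * (cnj (x$k) * A$k$j * x$j))"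
    by (simp add: sum_distrib_right)
  also have "\<dots> = (\<Sum>k\<in>UNIV. of_nat CARD('d \<Rightarrow> bool \<times> bool) * (cnj (x$k) * A$k$k * x$k))"
    by (simp add: moment2 ifz1)
  finally show ?thesis by (simp add: sum_distrib_left)
qed

lemma D_id: "D (\<lambda>_. (False, False)) x = x"
  by (simp add: D_def ph_def vec_eq_iff)

lemma qf_unit: "qf A (\<chi> i. if i = k then 1 else 0) = A$k$k"
  by (simp add: qf_def matrix_vector_mult_def ifz1 ifz2 cnj_if cong: if_cong)

lemma density_bound:
  fixes \<sigma> :: "complex^'d::finite^'d"
  assumes "density_op \<sigma>" "norm x = 1"
  shows "Re (qf \<sigma> x) \<le> real CARD('d \<Rightarrow> bool \<times> bool)"
proof -
  have pos: "positive_op \<sigma>" and tr: "ctrace \<sigma> = 1" using assms(1) by (auto simp: density_op_def)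
  have diag: "Im (\<sigma>$k$k) = 0 \<and> 0 \<le> Re (\<sigma>$k$k)" for k
    using pos_qf[OF pos, of "\<chi> i. if i = k then 1 else 0"] by (simp add: qf_unit)
  have "Re (qf \<sigma> x) = Re (qf \<sigma> (D (\<lambda>_. (False, False)) x))" by (simp add: D_id)
  also have "\<dots> \<le> (\<Sum>f\<in>UNIV. Re (qf \<sigma> (D f x)))"
    by (rule member_le_sum) (use pos_qf[OF pos] in auto)
  also have "\<dots> = Re (\<Sum>f\<in>UNIV. qf \<sigma> (D f x))" by (simp add: Re_sum)
  also have "\<dots> = real CARD('d \<Rightarrow> bool \<times> bool) * (\<Sum>k\<in>UNIV. (cmod (x$k))^2 * Re (\<sigma>$k$k))"
  proof -
    have e: "\<And>k. cnj (x$k) * \<sigma>$k$k * x$k = (cnj (x$k) * x$k) * \<sigma>$k$k" by (simp add: mult_ac)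
    have "\<And>k. Re (cnj (x$k) * \<sigma>$k$k * x$k) = (cmod (x$k))^2 * Re (\<sigma>$k$k)"
    proof -
      fix k
      have "cnj (x$k) * \<sigma>$k$k * x$k = of_real ((cmod (x$k))^2) * \<sigma>$k$k"
        by (simp only: e czz of_real_power)
      moreover have "Re (of_real r * z) = r * Re z" for r z by simp
      ultimately show "Re (cnj (x$k) * \<sigma>$k$k * x$k) = (cmod (x$k))^2 * Re (\<sigma>$k$k)" by metis
    qed
    note h = this
    have rn: "Re (of_nat n * z) = real n * Re z" for n z by simp
    have "Re (\<Sum>f\<in>UNIV. qf \<sigma> (D f x)) = Re (of_nat CARD('d \<Rightarrow> bool \<times> bool) * (\<Sum>k\<in>UNIV. cnj (x$k) * \<sigma>$k$k * x$k))"
      by (simp only: qf_D_sum)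
    also have "\<dots> = real CARD('d \<Rightarrow> bool \<times> bool) * (\<Sum>k\<in>UNIV. Re (cnj (x$k) * \<sigma>$k$k * x$k))"
      by (simp only: rn Re_sum)
    finally show ?thesis by (simp only: h)
  qed
  also have "\<dots> \<le> real CARD('d \<Rightarrow> bool \<times> bool) * (\<Sum>k\<in>UNIV. Re (\<sigma>$k$k))"
    by (intro mult_left_mono sum_mono) (use diag unit_comp_le[OF assms(2)] in \<open>auto intro: mult_left_le_one_le\<close>)
  also have "(\<Sum>k\<in>UNIV. Re (\<sigma>$k$k)) = 1"
    using tr by (simp add: ctrace_def flip: Re_sum)
  finally show ?thesis by simp
qed



lemma inner_m:
  fixes x :: "complex^'d::finite" and c :: complex
  shows "(\<Sum>m\<in>UNIV. (if (j = k \<and> l = m) \<or> (j = m \<and> l = k) then c else 0) * (x$j * cnj (x$k) * x$l * cnj (x$m)))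
    = (if j = k then c * (x$j * cnj (x$j)) * (x$l * cnj (x$l))
       else if l = k then c * (x$j * cnj (x$j)) * (x$k * cnj (x$k)) else 0)"
proof (cases "j = k")
  case True
  have "(\<Sum>m\<in>UNIV. (if (j = k \<and> l = m) \<or> (j = m \<and> l = k) then c else 0) * (x$j * cnj (x$k) * x$l * cnj (x$m)))
     = (\<Sum>m\<in>UNIV. if l = m then c * (x$j * cnj (x$k) * x$l * cnj (x$m)) else 0)"
    by (rule sum.cong) (use True in auto)
  thus ?thesis using True by (simp add: mult_ac)
next
  case False
  show ?thesis
  proof (cases "l = k")
    case True
    have "(\<Sum>m\<in>UNIV. (if (j = k \<and> l = m) \<or> (j = m \<and> l = k) then c else 0) * (x$j * cnj (x$k) * x$l * cnj (x$m)))
       = (\<Sum>m\<in>UNIV. if j = m then c * (x$j * cnj (x$k) * x$l * cnj (x$m)) else 0)"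
      by (rule sum.cong) (use True False in auto)
    thus ?thesis using True False by (simp add: mult_ac)
  next
    case lk: False
    have "(\<Sum>m\<in>UNIV. (if (j = k \<and> l = m) \<or> (j = m \<and> l = k) then c else 0) * (x$j * cnj (x$k) * x$l * cnj (x$m)))
       = 0"
      by (rule sum.neutral) (use lk False in auto)
    thus ?thesis using lk False by simp
  qed
qed

lemma sum_if_eq:
  fixes A :: complex
  shows "(\<Sum>k\<in>UNIV. if j = k then A else B k) = A + (\<Sum>k\<in>UNIV. B k) - B (j::'d::finite)"
proof -
  have "(\<Sum>k\<in>UNIV. if j = k then A else B k) = (\<Sum>k\<in>UNIV. B k + (if j = k then A - B k else 0))"
    by (rule sum.cong) auto
  also have "\<dots> = (\<Sum>k\<in>UNIV. B k) + (A - B j)" by (simp add: sum.distrib)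
  finally show ?thesis by simp
qed

lemma fourth:
  fixes x :: "complex^'d::finite"
  shows "(\<Sum>f\<in>UNIV. ((\<Sum>j\<in>UNIV. cnj (ph (f j)) * x$j) * cnj (\<Sum>j\<in>UNIV. cnj (ph (f j)) * x$j)) *
                     ((\<Sum>j\<in>UNIV. cnj (ph (f j)) * x$j) * cnj (\<Sum>j\<in>UNIV. cnj (ph (f j)) * x$j)))
    = of_nat CARD('d \<Rightarrow> bool \<times> bool) * (2 * (\<Sum>j\<in>UNIV. x$j * cnj (x$j))^2 - (\<Sum>j\<in>UNIV. (x$j * cnj (x$j))^2))"
  (is "?L = ?R")
proof -
  define N where "N = (of_nat CARD('d \<Rightarrow> bool \<times> bool) :: complex)"
  define w where "w j = x$j * cnj (x$j)" for j
  define S where "S = (\<Sum>j\<in>UNIV. w j)"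
  have z2: "(\<Sum>j\<in>UNIV. cnj (ph (f j)) * x$j) * cnj (\<Sum>j\<in>UNIV. cnj (ph (f j)) * x$j) =
     (\<Sum>j\<in>UNIV. \<Sum>k\<in>UNIV. (cnj (ph (f j)) * ph (f k)) * (x$j * cnj (x$k)))" for f
  proof -
    have c: "cnj (\<Sum>j\<in>UNIV. cnj (ph (f j)) * x$j) = (\<Sum>k\<in>UNIV. ph (f k) * cnj (x$k))"
      by simp
    have "(\<Sum>j\<in>UNIV. cnj (ph (f j)) * x$j) * (\<Sum>k\<in>UNIV. ph (f k) * cnj (x$k)) =
      (\<Sum>j\<in>UNIV. \<Sum>k\<in>UNIV. (cnj (ph (f j)) * x$j) * (ph (f k) * cnj (x$k)))"
      by (rule sum_product)
    also have "\<dots> = (\<Sum>j\<in>UNIV. \<Sum>k\<in>UNIV. (cnj (ph (f j)) * ph (f k)) * (x$j * cnj (x$k)))"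
      by (simp add: mult_ac)
    finally show ?thesis by (simp only: c)
  qed
  have z4: "((\<Sum>j\<in>UNIV. cnj (ph (f j)) * x$j) * cnj (\<Sum>j\<in>UNIV. cnj (ph (f j)) * x$j)) *
                     ((\<Sum>j\<in>UNIV. cnj (ph (f j)) * x$j) * cnj (\<Sum>j\<in>UNIV. cnj (ph (f j)) * x$j)) =
     (\<Sum>j\<in>UNIV. \<Sum>k\<in>UNIV. \<Sum>l\<in>UNIV. \<Sum>m\<in>UNIV. (cnj (ph (f j)) * ph (f k) * cnj (ph (f l)) * ph (f m)) *
        (x$j * cnj (x$k) * x$l * cnj (x$m)))" for f
    unfolding z2 by (simp add: sum_distrib_left sum_distrib_right mult_ac) (rule sum.cong[OF refl], rule sum.swap)
  have "?L = (\<Sum>f\<in>UNIV. \<Sum>j\<in>UNIV. \<Sum>k\<in>UNIV. \<Sum>l\<in>UNIV. \<Sum>m\<in>UNIV. (cnj (ph (f j)) * ph (f k) * cnj (ph (f l)) * ph (f m)) *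
        (x$j * cnj (x$k) * x$l * cnj (x$m)))"
    by (simp only: z4)
  also have "\<dots> = (\<Sum>j\<in>UNIV. \<Sum>k\<in>UNIV. \<Sum>l\<in>UNIV. \<Sum>m\<in>UNIV. \<Sum>f\<in>UNIV. (cnj (ph (f j)) * ph (f k) * cnj (ph (f l)) * ph (f m)) *
        (x$j * cnj (x$k) * x$l * cnj (x$m)))"
    by (simp only: sum.swap[of _ "UNIV :: ('d \<Rightarrow> bool \<times> bool) set"])
  also have "\<dots> = (\<Sum>j\<in>UNIV. \<Sum>k\<in>UNIV. \<Sum>l\<in>UNIV. \<Sum>m\<in>UNIV. (\<Sum>f\<in>UNIV. cnj (ph (f j)) * ph (f k) * cnj (ph (f l)) * ph (f m)) *
        (x$j * cnj (x$k) * x$l * cnj (x$m)))"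
    by (simp only: sum_distrib_right)
  also have "\<dots> = (\<Sum>j\<in>UNIV. \<Sum>k\<in>UNIV. \<Sum>l\<in>UNIV. \<Sum>m\<in>UNIV. (if (j = k \<and> l = m) \<or> (j = m \<and> l = k) then N else 0) *
        (x$j * cnj (x$k) * x$l * cnj (x$m)))"
    by (simp only: moment4 N_def)
  also have "\<dots> = (\<Sum>j\<in>UNIV. \<Sum>k\<in>UNIV. \<Sum>l\<in>UNIV. (if j = k then N * w j * w l
       else if l = k then N * w j * w k else 0))"
    by (simp only: inner_m w_def)
  also have "\<dots> = (\<Sum>j\<in>UNIV. \<Sum>k\<in>UNIV. (if j = k then N * w j * S else N * w j * w k))"
  proof -
    have "(\<Sum>l\<in>UNIV. (if j = k then N * w j * w l else if l = k then N * w j * w k else 0))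
      = (if j = k then N * w j * S else N * w j * w k)" for j k
      by (cases "j = k") (simp_all add: S_def sum_distrib_left)
    thus ?thesis by simp
  qed
  also have "\<dots> = (\<Sum>j\<in>UNIV. N * w j * S + N * w j * S - N * w j * w j)"
    by (simp only: sum_if_eq) (simp add: S_def sum_distrib_left)
  also have "\<dots> = ?R"
    by (simp add: S_def w_def N_def sum_subtractf sum.distrib sum_distrib_left sum_distrib_right power2_eq_square algebra_simps)
  finally show ?thesis .
qed



lemma avg_rep:
  fixes \<psi> :: "nat \<Rightarrow> complex^'d::finite"
  assumes pe: "pure_ensemble \<psi> p" and pv: "is_povm B E" and ds: "\<forall>b\<in>B. density_op (\<sigma> b)"
  shows "avg_fidelity \<psi> p B E \<sigma> = (\<Sum>i. p i * (\<Sum>b\<in>B. Re (qf (E b) (\<psi> i)) * Re (qf (\<sigma> b) (\<psi> i))))"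
    and "avg_fidelity \<psi> p B E \<sigma> \<le> real CARD('d \<Rightarrow> bool \<times> bool)"
proof -
  define N where "N = real CARD('d \<Rightarrow> bool \<times> bool)"
  have un: "\<And>i. norm (\<psi> i) = 1" and pp: "\<And>i. 0 \<le> p i" and ps: "p sums 1"
    using pe by (auto simp: pure_ensemble_def)
  have fin: "finite B" using pv by (simp add: is_povm_def)
  define a where "a b i = Re (qf (E b) (\<psi> i))" for b i
  define c where "c b i = Re (qf (\<sigma> b) (\<psi> i))" for b i
  have a01: "0 \<le> a b i" "a b i \<le> 1" if "b \<in> B" for b i
    using povm_a[OF pv un[of i]] that by (auto simp: a_def)
  have asum: "(\<Sum>b\<in>B. a b i) = 1" for i
    using povm_a[OF pv un[of i]] by (simp add: a_def)
  have c0N: "0 \<le> c b i" "c b i \<le> N" if "b \<in> B" for b i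
  proof -
    have "density_op (\<sigma> b)" using ds that by blast
    thus "0 \<le> c b i" using pos_qf[of "\<sigma> b" "\<psi> i"] by (auto simp: c_def density_op_def)
    show "c b i \<le> N" using density_bound[OF \<open>density_op (\<sigma> b)\<close> un[of i]] by (simp add: c_def N_def)
  qed
  have sN: "summable (\<lambda>i. p i * N)"
    using summable_mult2[OF sums_summable[OF ps]] .
  have summ: "summable (\<lambda>i. p i * a b i * c b i)" if "b \<in> B" for b
  proof (rule summable_comparison_test'[OF sN])
    fix i :: nat
    have "0 \<le> p i * a b i * c b i" using pp a01 c0N that by simp
    moreover have "p i * a b i * c b i \<le> p i * 1 * N"
      using pp a01 c0N that by (intro mult_mono) (auto intro: mult_left_le_one_le)
    ultimately show "norm (p i * a b i * c b i) \<le> p i * N" by simp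
  qed
  have "avg_fidelity \<psi> p B E \<sigma> = (\<Sum>b\<in>B. \<Sum>i. p i * a b i * c b i)"
    by (simp add: avg_fidelity_def ctrace_proj a_def c_def)
  also have "\<dots> = (\<Sum>i. \<Sum>b\<in>B. p i * a b i * c b i)"
    by (rule suminf_sum[symmetric]) (rule summ)
  also have "\<dots> = (\<Sum>i. p i * (\<Sum>b\<in>B. a b i * c b i))"
    by (simp add: sum_distrib_left mult.assoc)
  finally show rep: "avg_fidelity \<psi> p B E \<sigma> = (\<Sum>i. p i * (\<Sum>b\<in>B. Re (qf (E b) (\<psi> i)) * Re (qf (\<sigma> b) (\<psi> i))))"
    by (simp add: a_def c_def)
  have s2: "summable (\<lambda>i. p i * (\<Sum>b\<in>B. a b i * c b i))"
    using summable_sum[of B "\<lambda>b i. p i * a b i * c b i", OF summ]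
    by (simp add: sum_distrib_left mult.assoc)
  have le: "p i * (\<Sum>b\<in>B. a b i * c b i) \<le> p i * N" for i
  proof -
    have "(\<Sum>b\<in>B. a b i * c b i) \<le> (\<Sum>b\<in>B. a b i * N)"
      by (rule sum_mono) (use a01 c0N in \<open>auto intro: mult_left_mono\<close>)
    also have "\<dots> = N" using asum[of i] by (simp add: sum_distrib_right[symmetric])
    finally show ?thesis using pp[of i] by (rule mult_left_mono)
  qed
  have "(\<Sum>i. p i * (\<Sum>b\<in>B. a b i * c b i)) \<le> (\<Sum>i. p i * N)"
    by (rule suminf_le[OF le s2 sN])
  also have "(\<Sum>i. p i * N) = N" using sums_unique[OF sums_mult2[OF ps, of N]] by simp
  finally show "avg_fidelity \<psi> p B E \<sigma> \<le> real CARD('d \<Rightarrow> bool \<times> bool)"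
    using rep by (simp add: a_def c_def N_def)
qed

lemma sumPlus:
  "(\<Sum>y\<in>UNIV. g y) = (\<Sum>j\<in>UNIV. g (Inl j)) + (\<Sum>f\<in>UNIV. g (Inr f))"
  for g :: "('a::finite + 'b::finite) \<Rightarrow> 'c::comm_monoid_add"
  by (subst UNIV_Plus_UNIV[symmetric], subst sum.Plus) (auto simp: comp_def)

lemma fourth_real:
  fixes x :: "complex^'d::finite"
  shows "(\<Sum>f\<in>UNIV. (cmod (\<Sum>j\<in>UNIV. cnj (ph (f j)) * x$j))^2 * (cmod (\<Sum>j\<in>UNIV. cnj (ph (f j)) * x$j))^2)
    = real CARD('d \<Rightarrow> bool \<times> bool) * (2 * (\<Sum>j\<in>UNIV. (cmod (x$j))^2)^2 - (\<Sum>j\<in>UNIV. (cmod (x$j))^2 * (cmod (x$j))^2))"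
proof -
  have "complex_of_real (\<Sum>f\<in>UNIV. (cmod (\<Sum>j\<in>UNIV. cnj (ph (f j)) * x$j))^2 * (cmod (\<Sum>j\<in>UNIV. cnj (ph (f j)) * x$j))^2)
    = complex_of_real (real CARD('d \<Rightarrow> bool \<times> bool) * (2 * (\<Sum>j\<in>UNIV. (cmod (x$j))^2)^2 - (\<Sum>j\<in>UNIV. (cmod (x$j))^2 * (cmod (x$j))^2)))"
    using fourth[of x] unfolding zcz by (simp add: power2_eq_square)
  thus ?thesis by (simp only: of_real_eq_iff)
qed


definition vv :: "('d::finite) + ('d \<Rightarrow> bool \<times> bool) \<Rightarrow> complex^'d" where
  "vv y = (case y of Inl j \<Rightarrow> (\<chi> i. if i = j then 1 else 0) | Inr f \<Rightarrow> (\<chi> i. ph (f i)))"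

definition wt :: "('d::finite) + ('d \<Rightarrow> bool \<times> bool) \<Rightarrow> real" where
  "wt y = (case y of Inl j \<Rightarrow> 1 / (real CARD('d) + 1)
     | Inr f \<Rightarrow> real CARD('d) / ((real CARD('d) + 1) * real CARD('d \<Rightarrow> bool \<times> bool)))"

definition sw :: "('d::finite) + ('d \<Rightarrow> bool \<times> bool) \<Rightarrow> real" where
  "sw y = (case y of Inl j \<Rightarrow> 1 | Inr f \<Rightarrow> 1 / real CARD('d))"

definition Eo :: "('d::finite) + ('d \<Rightarrow> bool \<times> bool) \<Rightarrow> complex^'d^'d" where
  "Eo y = smp (of_real (wt y)) (vv y)"

definition So :: "('d::finite) + ('d \<Rightarrow> bool \<times> bool) \<Rightarrow> complex^'d^'d" where
  "So y = smp (of_real (sw y)) (vv y)"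

lemma wt_nn: "0 \<le> wt y"
  by (cases y) (auto simp: wt_def)

lemma sw_nn: "0 \<le> sw y"
  by (cases y) (auto simp: sw_def)

lemma cardpos: "0 < real CARD('d::finite \<Rightarrow> bool \<times> bool)" "0 < real CARD('d::finite)"
  by simp_all

lemma unit_delta:
  fixes c :: complex
  shows "(\<Sum>j\<in>UNIV. c * ((if r = j then 1 else 0) * cnj (if s = j then 1 else 0))) = (if r = (s::'d::finite) then c else 0)"
proof -
  have "(\<Sum>j\<in>UNIV. c * ((if r = j then 1 else 0) * cnj (if s = j then 1 else 0))) =
        (\<Sum>j\<in>UNIV. if j = r then (if r = s then c else 0) else 0)"
    by (rule sum.cong) auto
  thus ?thesis by simp
qed

lemma sumE: "(\<Sum>y\<in>UNIV. Eo y) = (mat 1 :: complex^'d::finite^'d)"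
proof -
  define d where "d = real CARD('d)"
  define N where "N = real CARD('d \<Rightarrow> bool \<times> bool)"
  have Np: "N > 0" "d > 0" using cardpos by (auto simp: N_def d_def)
  have Nd: "N * d > 0" using Np by simp
  have Nd2: "N + N * d > 0" using Np Nd by linarith
  have Np2: "N + N * d \<noteq> 0" "d + 1 \<noteq> 0" "(d + 1) * N \<noteq> 0" "N * (d + 1) \<noteq> 0" "1 + d \<noteq> 0"
    using Np Nd2 by simp_all
  have "(\<Sum>y\<in>UNIV. Eo y) $ r $ s = mat 1 $ r $ s" for r s :: 'd
  proof -
    have "(\<Sum>y\<in>UNIV. Eo y) $ r $ s = (\<Sum>y\<in>UNIV. Eo y $ r $ s)" by simp
    also have "\<dots> = (\<Sum>j\<in>UNIV. Eo (Inl j) $ r $ s) + (\<Sum>f\<in>UNIV. Eo (Inr f) $ r $ s)"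
      by (rule sumPlus)
    also have "(\<Sum>j\<in>UNIV. Eo (Inl j) $ r $ s) = (if r = s then of_real (1 / (d + 1)) else 0)"
    proof -
      have "(\<Sum>j\<in>UNIV. Eo (Inl j) $ r $ s) = (\<Sum>j\<in>UNIV. of_real (1 / (d + 1)) * ((if r = j then 1 else 0) * cnj (if s = j then 1 else 0)))"
        by (rule sum.cong) (simp_all add: Eo_def smp_def vv_def wt_def d_def)
      thus ?thesis by (simp only: unit_delta)
    qed
    also have "(\<Sum>f\<in>UNIV. Eo (Inr f) $ r $ s) =
        of_real (d / ((d + 1) * N)) * (\<Sum>f\<in>UNIV. cnj (ph (f s)) * ph (f r))"
    proof -
      have "(\<Sum>f\<in>UNIV. Eo (Inr f) $ r $ s) = (\<Sum>f\<in>UNIV. of_real (d / ((d + 1) * N)) * (cnj (ph (f s)) * ph (f r)))"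
        by (rule sum.cong) (simp_all add: Eo_def smp_def vv_def wt_def d_def N_def mult_ac)
      thus ?thesis by (simp only: sum_distrib_left)
    qed
    also have "\<dots> = (if r = s then of_real (d / ((d + 1) * N)) * of_real N else 0)"
      by (simp add: moment2 N_def)
    also have "(if r = s then complex_of_real (1 / (d + 1)) else 0) + (if r = s then of_real (d / ((d + 1) * N)) * of_real N else 0)
       = (if r = s then of_real (1 / (d + 1) + d / ((d + 1) * N) * N) else 0)"
      by simp
    also have "1 / (d + 1) + d / ((d + 1) * N) * N = 1"
    proof -
      have "d / ((d + 1) * N) * N = d / (d + 1)" using Np by simp
      moreover have "1 / (d + 1) + d / (d + 1) = 1" using Np by (simp add: add_divide_distrib[symmetric])
      ultimately show ?thesis by simp
    qed
    finally show ?thesis by (simp add: mat_def)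
  qed
  thus ?thesis by (simp add: vec_eq_iff)
qed

lemma Eo_pos: "positive_op (Eo y)"
  unfolding Eo_def by (rule positive_smp[OF wt_nn])

lemma So_density: "density_op (So y :: complex^'d::finite^'d)"
proof -
  have "ctrace (So y) = 1"
  proof (cases y)
    case (Inl j)
    have "(\<Sum>r\<in>UNIV. (cmod ((\<chi> i. if i = j then (1::complex) else 0) $ r))^2) = (\<Sum>r\<in>UNIV. if r = j then 1 else 0 :: real)"
      by (rule sum.cong) auto
    thus ?thesis using Inl by (simp add: So_def ctrace_smp sw_def vv_def)
  next
    case (Inr f)
    have "(\<Sum>r\<in>UNIV. (cmod ((\<chi> i. ph (f i)) $ r))^2) = real CARD('d)"
      by (simp add: norm_ph)
    thus ?thesis using Inr by (simp add: So_def ctrace_smp sw_def vv_def)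
  qed
  thus ?thesis unfolding density_op_def So_def using positive_smp[OF sw_nn] by simp
qed

lemma Re_qf_smp: "Re (qf (smp (of_real w) v) x) = w * (cmod (ip v x))^2"
  by (simp only: qf_smp of_real_mult[symmetric] Re_complex_of_real)

lemma ip_unit: "ip (\<chi> i. if i = j then 1 else 0) x = x $ j"
  by (simp add: ip_def ifz1 cnj_if cong: if_cong)

lemma per_state:
  fixes x :: "complex^'d::finite"
  assumes "norm x = 1"
  shows "(\<Sum>y\<in>UNIV. Re (qf (Eo y) x) * Re (qf (So y) x)) = 2 / (real CARD('d) + 1)"
proof -
  define d where "d = real CARD('d)"
  define N where "N = real CARD('d \<Rightarrow> bool \<times> bool)"
  have Np: "N > 0" "d > 0" using cardpos by (auto simp: N_def d_def)
  have Nd: "N * d > 0" using Np by simp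
  have Nd2: "N + N * d > 0" using Np Nd by linarith
  have Np2: "N + N * d \<noteq> 0" "d + 1 \<noteq> 0" "(d + 1) * N \<noteq> 0" "N * (d + 1) \<noteq> 0" "1 + d \<noteq> 0"
    using Np Nd2 by simp_all
  define Q where "Q = (\<Sum>j\<in>UNIV. (cmod (x$j))^2 * (cmod (x$j))^2)"
  have S1: "(\<Sum>j\<in>UNIV. (cmod (x$j))^2) = 1" using unit_sum[OF assms] .
  have "(\<Sum>y\<in>UNIV. Re (qf (Eo y) x) * Re (qf (So y) x)) =
     (\<Sum>j\<in>UNIV. Re (qf (Eo (Inl j)) x) * Re (qf (So (Inl j)) x)) +
     (\<Sum>f\<in>UNIV. Re (qf (Eo (Inr f)) x) * Re (qf (So (Inr f)) x))"
    by (rule sumPlus)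
  also have "(\<Sum>j\<in>UNIV. Re (qf (Eo (Inl j)) x) * Re (qf (So (Inl j)) x)) = 1 / (d + 1) * Q"
    unfolding Eo_def So_def Re_qf_smp by (simp add: vv_def wt_def sw_def ip_unit Q_def d_def sum_distrib_left mult_ac)
  also have "(\<Sum>f\<in>UNIV. Re (qf (Eo (Inr f)) x) * Re (qf (So (Inr f)) x)) =
     d / ((d + 1) * N) * (1 / d) * (\<Sum>f\<in>UNIV. (cmod (\<Sum>j\<in>UNIV. cnj (ph (f j)) * x$j))^2 * (cmod (\<Sum>j\<in>UNIV. cnj (ph (f j)) * x$j))^2)"
    unfolding Eo_def So_def Re_qf_smp by (simp add: vv_def wt_def sw_def ip_def d_def N_def sum_distrib_left mult_ac)
  also have "\<dots> = d / ((d + 1) * N) * (1 / d) * (N * (2 - Q))"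
    by (simp only: fourth_real S1 Q_def N_def) simp
  also have "d / ((d + 1) * N) * (1 / d) * (N * (2 - Q)) = (2 - Q) / (d + 1)"
    using Np by simp
  also have "1 / (d + 1) * Q + (2 - Q) / (d + 1) = 2 / (d + 1)"
    using Np by (simp add: add_divide_distrib[symmetric])
  finally show ?thesis by (simp add: d_def)
qed



theorem theorem1:
  fixes \<psi> :: "nat \<Rightarrow> complex^'d" and p :: "nat \<Rightarrow> real"
  assumes "pure_ensemble \<psi> p"
  shows "accessible_fidelity \<psi> p \<ge> 2 / (real CARD('d) + 1)"
proof -
  have "\<exists>g. bij_betw g {0..<card (UNIV :: ('d + ('d \<Rightarrow> bool \<times> bool)) set)} (UNIV :: ('d + ('d \<Rightarrow> bool \<times> bool)) set)"
    by (rule ex_bij_betw_nat_finite) simp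
  then obtain g where g: "bij_betw g {0..<card (UNIV :: ('d + ('d \<Rightarrow> bool \<times> bool)) set)} (UNIV :: ('d + ('d \<Rightarrow> bool \<times> bool)) set)"
    by blast
  define B where "B = {0..<card (UNIV :: ('d + ('d \<Rightarrow> bool \<times> bool)) set)}"
  define E where "E n = Eo (g n)" for n
  define \<sigma> where "\<sigma> n = So (g n)" for n
  have povm: "is_povm B E"
    unfolding is_povm_def
  proof (intro conjI ballI)
    show "finite B" by (simp add: B_def)
    show "positive_op (E b)" for b by (simp add: E_def Eo_pos)
    have "(\<Sum>b\<in>B. E b) = (\<Sum>y\<in>UNIV. Eo y)"
      unfolding E_def B_def by (rule sum.reindex_bij_betw[OF g])
    thus "(\<Sum>b\<in>B. E b) = mat 1" by (simp add: sumE)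
  qed
  have dens: "\<forall>b\<in>B. density_op (\<sigma> b)" by (simp add: \<sigma>_def So_density)
  have un: "\<And>i. norm (\<psi> i) = 1" and ps: "p sums 1"
    using assms by (auto simp: pure_ensemble_def)
  have inner: "(\<Sum>b\<in>B. Re (qf (E b) (\<psi> i)) * Re (qf (\<sigma> b) (\<psi> i))) = 2 / (real CARD('d) + 1)" for i
  proof -
    have "(\<Sum>b\<in>B. Re (qf (E b) (\<psi> i)) * Re (qf (\<sigma> b) (\<psi> i))) =
          (\<Sum>y\<in>UNIV. Re (qf (Eo y) (\<psi> i)) * Re (qf (So y) (\<psi> i)))"
      unfolding E_def \<sigma>_def B_def
      by (rule sum.reindex_bij_betw[OF g, where g = "\<lambda>y. Re (qf (Eo y) (\<psi> i)) * Re (qf (So y) (\<psi> i))"])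
    also have "\<dots> = 2 / (real CARD('d) + 1)" by (rule per_state[OF un])
    finally show ?thesis .
  qed
  have val: "avg_fidelity \<psi> p B E \<sigma> = 2 / (real CARD('d) + 1)"
  proof -
    have "avg_fidelity \<psi> p B E \<sigma> = (\<Sum>i. p i * (2 / (real CARD('d) + 1)))"
      using avg_rep(1)[OF assms povm dens] inner by simp
    also have "\<dots> = 2 / (real CARD('d) + 1)"
    proof -
      define K where "K = 2 / (real CARD('d) + 1)"
      have "(\<lambda>i. p i * K) sums (1 * K)" by (rule sums_mult2[OF ps])
      hence "(\<lambda>i. p i * K) sums K" by simp
      hence "(\<Sum>i. p i * K) = K" by (rule sums_unique[symmetric])
      thus ?thesis by (simp only: K_def)
    qed
    finally show ?thesis .
  qed
  let ?S = "{avg_fidelity \<psi> p B E \<sigma> | B E \<sigma>. is_povm B E \<and> (\<forall>b\<in>B. density_op (\<sigma> b))}"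
  have mem: "2 / (real CARD('d) + 1) \<in> ?S"
  proof -
    have "2 / (real CARD('d) + 1) = avg_fidelity \<psi> p B E \<sigma> \<and> is_povm B E \<and> (\<forall>b\<in>B. density_op (\<sigma> b))"
      using povm dens val by simp
    thus ?thesis by blast
  qed
  have bdd: "bdd_above ?S"
  proof (rule bdd_aboveI)
    fix x assume "x \<in> ?S"
    then obtain B' E' \<sigma>' where "x = avg_fidelity \<psi> p B' E' \<sigma>'" "is_povm B' E'" "\<forall>b\<in>B'. density_op (\<sigma>' b)"
      by blast
    thus "x \<le> real CARD('d \<Rightarrow> bool \<times> bool)" using avg_rep(2)[OF assms] by blast
  qed
  show ?thesis
    unfolding accessible_fidelity_def using cSup_upper[OF mem bdd] .
qed


end
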